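(* (i) For any positive integers $a,r$ there exists an $(ra^2,2,ra,r)$-PSEDF in $\mathbb{Z}_{ra^2}$. (ii) For any positive integers $\lambda,a$ there exists a non-disjoint $(\lambda a^2,2,\lambda a,\lambda)$-SEDF in $\mathbb{Z}_{\lambda a^2}$. (iii) For any positive integer $k$, the sets $\{0,1,\dots,k-1\}$ and $\{0,k,2k,\dots,(k-1)k\}$ form a non-disjoint $(k^2,2,k,1)$-SEDF in $\mathbb{Z}_{k^2}$.
   Context: Groups are written additively. For subsets $A,B$ of a group $G$, $\Delta(A,B)$ is the multiset $\{a-b:a\in A,b\in B\}$ and $\lambda G$ is the multiset with each element of $G$ exactly $\lambda$ times. For $G$ of order $v$ and $m>1$, a family of $k$-subsets $\{A_1,\dots,A_m\}$ of $G$ is a $(v,m,k,\lambda)$-PSEDF if $\Delta(A_i,A_j)=\lambda G$ for every $i\neq j$; it is a non-disjoint $(v,m,k,\lambda)$-SEDF if for each $i$ the multiset union $\bigcup_{j\neq i}\Delta(A_i,A_j)$ equals $\lambda G$. The sets need not be disjoint. *)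

theory Defs
  imports Main "HOL-Library.Multiset"
begin

text \<open>The cyclic group Z_n is modelled by the carrier {0..<n} of naturals with
  addition/subtraction modulo n.  A family {A_1,...,A_m} is a list of subsets.\<close>

definition zsub :: "nat \<Rightarrow> nat \<Rightarrow> nat \<Rightarrow> nat" where
  "zsub n a b = (a + n - b mod n) mod n"

definition Delta :: "nat \<Rightarrow> nat set \<Rightarrow> nat set \<Rightarrow> nat multiset" where
  "Delta n A B = image_mset (\<lambda>(a, b). zsub n a b) (mset_set (A \<times> B))"

definition lam_group :: "nat \<Rightarrow> nat \<Rightarrow> nat multiset" where
  "lam_group n lam = repeat_mset lam (mset_set {0..<n})"

definition is_family :: "nat \<Rightarrow> nat \<Rightarrow> nat \<Rightarrow> nat set list \<Rightarrow> bool" where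
  "is_family n m k As \<longleftrightarrow> 1 < m \<and> length As = m \<and>
     (\<forall>i<m. As ! i \<subseteq> {0..<n} \<and> card (As ! i) = k)"

definition is_PSEDF :: "nat \<Rightarrow> nat \<Rightarrow> nat \<Rightarrow> nat \<Rightarrow> nat set list \<Rightarrow> bool" where
  "is_PSEDF n m k lam As \<longleftrightarrow> is_family n m k As \<and>
     (\<forall>i<m. \<forall>j<m. i \<noteq> j \<longrightarrow> Delta n (As ! i) (As ! j) = lam_group n lam)"

text \<open>(Non-disjoint) SEDF: the sets need not be disjoint.\<close>
definition is_SEDF :: "nat \<Rightarrow> nat \<Rightarrow> nat \<Rightarrow> nat \<Rightarrow> nat set list \<Rightarrow> bool" where
  "is_SEDF n m k lam As \<longleftrightarrow> is_family n m k As \<and>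
     (\<forall>i<m. (\<Sum>j\<in>{0..<m} - {i}. Delta n (As ! i) (As ! j)) = lam_group n lam)"

end

theory Submission
  imports Defs
begin

lemma fst_prod_mset: "image_mset fst (mset_set ({0..<n} \<times> {0..<r})) = repeat_mset r (mset_set {0..<(n::nat)})"
proof (induction r)
  case 0
  then show ?case by simp
next
  case (Suc r)
  have e: "{0..<n} \<times> {0..<Suc r} = {0..<n} \<times> {0..<r} \<union> {0..<n} \<times> {r}" by auto
  have "mset_set ({0..<n} \<times> {0..<Suc r}) = mset_set ({0..<n} \<times> {0..<r}) + mset_set ({0..<n} \<times> {r})"
    unfolding e by (rule mset_set_Union) auto
  moreover have "image_mset fst (mset_set ({0..<n} \<times> {r})) = mset_set {0..<n}"
  proof -
    have "inj_on fst ({0..<n} \<times> {r})" by (auto simp: inj_on_def)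
    then have "image_mset fst (mset_set ({0..<n} \<times> {r})) = mset_set (fst ` ({0..<n} \<times> {r}))"
      by (rule image_mset_mset_set)
    also have "fst ` ({0..<n} \<times> {r}) = {0..<n}" by force
    finally show ?thesis .
  qed
  ultimately show ?case using Suc by (simp add: add.commute)
qed

lemma generic:
  fixes n r :: nat and A B :: "nat set" and \<phi> :: "nat \<times> nat \<Rightarrow> nat \<times> nat"
  assumes inj: "inj_on \<phi> ({0..<n} \<times> {0..<r})"
    and into: "\<phi> ` ({0..<n} \<times> {0..<r}) \<subseteq> A \<times> B"
    and fin: "finite A" "finite B"
    and cd: "card A * card B = n * r"
    and z: "\<And>y t. y < n \<Longrightarrow> t < r \<Longrightarrow> zsub n (fst (\<phi> (y,t))) (snd (\<phi> (y,t))) = y"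
  shows "Delta n A B = lam_group n r"
proof -
  let ?D = "{0..<n} \<times> {0..<r}"
  have "card (\<phi> ` ?D) = card (A \<times> B)"
    using card_image[OF inj] cd by (simp add: card_cartesian_product)
  then have im: "\<phi> ` ?D = A \<times> B"
    using into fin by (intro card_subset_eq) auto
  have "mset_set (A \<times> B) = image_mset \<phi> (mset_set ?D)"
    using image_mset_mset_set[OF inj] im by simp
  then have "Delta n A B = image_mset ((\<lambda>(a, b). zsub n a b) \<circ> \<phi>) (mset_set ?D)"
    unfolding Delta_def by (simp add: image_mset.compositionality)
  also have "\<dots> = image_mset fst (mset_set ?D)"
    by (rule image_mset_cong) (use z in \<open>auto simp: case_prod_beta\<close>)
  also have "\<dots> = lam_group n r" unfolding lam_group_def by (rule fst_prod_mset)
  finally show ?thesis .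
qed


definition setA :: "nat \<Rightarrow> nat \<Rightarrow> nat set" where
  "setA r a = (\<lambda>(i,h). i + h*a^2) ` ({0..<a}\<times>{0..<r})"
definition setB :: "nat \<Rightarrow> nat \<Rightarrow> nat set" where
  "setB r a = (\<lambda>j. j*a) ` {0..<r*a}"
definition bb :: "nat \<Rightarrow> nat \<Rightarrow> nat \<Rightarrow> nat" where
  "bb a y t = ((a - (y div a) mod a) mod a + t*a)*a"
definition phi :: "nat \<Rightarrow> nat \<Rightarrow> nat \<times> nat \<Rightarrow> nat \<times> nat" where
  "phi r a p = ((fst p + bb a (fst p) (snd p)) mod (r*a^2), bb a (fst p) (snd p))"

lemma zsub_add: "y < n \<Longrightarrow> b < n \<Longrightarrow> zsub n ((y + b) mod n) b = y"
  unfolding zsub_def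
proof -
  assume "y < n" "b < n"
  show "((y + b) mod n + n - b mod n) mod n = y"
  proof (cases "y + b < n")
    case True
    then show ?thesis using \<open>y<n\<close> \<open>b<n\<close> by simp
  next
    case False
    then have "(y + b) mod n = y + b - n" using \<open>y<n\<close> \<open>b<n\<close>
      by (simp add: le_mod_geq)
    then show ?thesis using False \<open>y<n\<close> \<open>b<n\<close> by simp
  qed
qed

lemma zsub_lt: "0 < n \<Longrightarrow> zsub n x b < n" unfolding zsub_def by simp

lemma zsub_swap: "x < n \<Longrightarrow> b < n \<Longrightarrow> zsub n b x = (n - zsub n x b) mod n"
  unfolding zsub_def
proof -
  assume a: "x < n" "b < n"
  show "(b + n - x mod n) mod n = (n - (x + n - b mod n) mod n) mod n"
  proof (cases "x < b")
    case True then show ?thesis using a by (simp add: le_mod_geq)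
  next
    case False
    show ?thesis
    proof (cases "x = b")
      case True then show ?thesis using a by simp
    next
      case f: False
      then have "(x + n - b) mod n = x - b" using False a
        by (simp add: le_mod_geq)
      then show ?thesis using a False f by simp
    qed
  qed
qed

lemma bb_lt:
  assumes "0 < a" "t < r"
  shows "bb a y t < r * a^2"
proof -
  have c: "(a - (y div a) mod a) mod a < a" using assms by simp
  have "t + 1 \<le> r" using assms by simp
  then have "(t+1)*a \<le> r*a" by (rule mult_right_mono) simp
  then have "(a - (y div a) mod a) mod a + t*a < r*a" using c by simp
  then have "((a - (y div a) mod a) mod a + t*a)*a < r*a*a" using assms by simp
  then show ?thesis unfolding bb_def by (simp add: power2_eq_square mult.assoc)
qed

lemma bb_mod:
  assumes "0 < a"
  shows "(y + bb a y t) mod a^2 = y mod a"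
proof -
  define q where "q = (y div a) mod a"
  define c where "c = (a - q) mod a"
  have y1: "y = a * (y div a) + y mod a" by simp
  have y2: "y div a = a * (y div a div a) + q" unfolding q_def by simp
  have y3: "y div a div a = y div a^2" by (simp add: power2_eq_square div_mult2_eq)
  have y: "y = (y div a^2)*a^2 + q*a + y mod a"
    using y1 y2 y3 by (metis add.commute mult.commute power2_eq_square distrib_left mult.assoc)
  have qa: "q < a" unfolding q_def using assms by simp
  have qc: "(q + c) mod a = 0"
  proof (cases "q = 0")
    case True then show ?thesis unfolding c_def by simp
  next
    case False then have "c = a - q" unfolding c_def using qa by simp
    then show ?thesis using qa by simp
  qed
  then obtain m where m: "q + c = a * m" by auto
  have eq: "y + bb a y t = y mod a + (y div a^2 + m + t) * a^2"
    unfolding bb_def c_def[symmetric] q_def[symmetric]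
    apply (subst y) using m by (simp add: algebra_simps power2_eq_square, metis distrib_left add.commute)
  have "y mod a < a^2"
  proof -
    have "y mod a < a" using assms by simp
    moreover have "a \<le> a^2" using assms by (simp add: power2_eq_square)
    ultimately show ?thesis by linarith
  qed
  then have lt: "y mod a < a^2" .
  have "(y + bb a y t) mod a^2 = (y mod a + (y div a^2 + m + t) * a^2) mod a^2"
    by (simp only: eq)
  also have "\<dots> = (y mod a) mod a^2" by (rule mod_mult_self1)
  also have "\<dots> = y mod a" using lt by (rule mod_less)
  finally show ?thesis .
qed


lemma bb_j:
  assumes "0 < a" "t < r"
  shows "bb a y t = ((a - (y div a) mod a) mod a + t*a) * a \<and> (a - (y div a) mod a) mod a + t*a < r*a"
proof -
  have c: "(a - (y div a) mod a) mod a < a" using assms by simp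
  have "t + 1 \<le> r" using assms by simp
  then have "(t+1)*a \<le> r*a" by (rule mult_right_mono) simp
  then show ?thesis using c unfolding bb_def by simp
qed

lemma phi_z:
  assumes "0 < a" "y < r*a^2" "t < r"
  shows "zsub (r*a^2) (fst (phi r a (y,t))) (snd (phi r a (y,t))) = y"
  unfolding phi_def using zsub_add[OF assms(2) bb_lt[OF assms(1,3)]] by simp

lemma phi_in:
  assumes "0 < a" "y < r*a^2" "t < r"
  shows "phi r a (y,t) \<in> setA r a \<times> setB r a"
proof -
  define b where "b = bb a y t"
  define x where "x = (y + b) mod (r*a^2)"
  have rpos: "0 < r" using assms by simp
  have "x mod a^2 = (y + b) mod a^2" unfolding x_def
    by (simp add: mod_mod_cancel)
  also have "\<dots> = y mod a" unfolding b_def by (rule bb_mod[OF assms(1)])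
  finally have xm: "x mod a^2 < a" using assms by simp
  have "x < r*a^2" unfolding x_def using assms by simp
  then have xd: "x div a^2 < r" by (simp add: less_mult_imp_div_less)
  have "x = x mod a^2 + (x div a^2)*a^2" using mod_div_mult_eq[of x "a^2"] by simp
  then have "x \<in> setA r a" unfolding setA_def using xm xd
    by (intro image_eqI[where x="(x mod a^2, x div a^2)"]) auto
  moreover have "b \<in> setB r a" unfolding setB_def b_def using bb_j[OF assms(1,3), of y] by auto
  ultimately show ?thesis unfolding phi_def x_def b_def by simp
qed

lemma phi_inj:
  assumes "0 < a"
  shows "inj_on (phi r a) ({0..<r*a^2} \<times> {0..<r})"
proof (rule inj_onI)
  fix p q assume p: "p \<in> {0..<r*a^2} \<times> {0..<r}" and q: "q \<in> {0..<r*a^2} \<times> {0..<r}"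
    and e: "phi r a p = phi r a q"
  obtain y t where pd: "p = (y,t)" by (cases p)
  obtain y' t' where qd: "q = (y',t')" by (cases q)
  have "y = y'" using phi_z[of a y r t] phi_z[of a y' r t'] assms e p q pd qd by auto
  moreover have "bb a y t = bb a y' t'" using e pd qd unfolding phi_def by simp
  ultimately have "t * a = t' * a" using assms unfolding bb_def by simp
  then have "t = t'" using assms by simp
  then show "p = q" using pd qd \<open>y = y'\<close> by simp
qed

lemma card_setA: "0 < a \<Longrightarrow> card (setA r a) = r * a"
  unfolding setA_def
proof (subst card_image)
  assume a: "0 < a"
  show "inj_on (\<lambda>(i, h). i + h * a\<^sup>2) ({0..<a} \<times> {0..<r})"
  proof (rule inj_onI, clarsimp)
    fix i h i' h' assume "i < a" "i' < a" "i + h*a^2 = i' + h'*a^2"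
    moreover have "a \<le> a^2" using a by (simp add: power2_eq_square)
    ultimately have l1: "i < a^2" "i' < a^2" using \<open>i < a\<close> \<open>i' < a\<close> by linarith+
    have "(i + h*a^2) mod a^2 = (i' + h'*a^2) mod a^2" using \<open>i + h*a^2 = i' + h'*a^2\<close> by simp
    then have ii: "i = i'" using l1 by simp
    then have "h*a^2 = h'*a^2" using \<open>i + h*a^2 = i' + h'*a^2\<close> by simp
    then have "h = h'" using a by simp
    note ii this
    then show "i = i' \<and> h = h'" by simp
  qed
qed (simp add: mult.commute)

lemma card_setB: "0 < a \<Longrightarrow> card (setB r a) = r * a"
  unfolding setB_def by (subst card_image) (auto simp: inj_on_def)

lemma fin_sets: "finite (setA r a)" "finite (setB r a)"
  unfolding setA_def setB_def by auto

lemma DeltaAB: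
  assumes "0 < a"
  shows "Delta (r*a^2) (setA r a) (setB r a) = lam_group (r*a^2) r"
proof (rule generic[OF phi_inj[OF assms]])
  show "phi r a ` ({0..<r * a\<^sup>2} \<times> {0..<r}) \<subseteq> setA r a \<times> setB r a"
  proof (rule image_subsetI)
    fix p assume "p \<in> {0..<r * a\<^sup>2} \<times> {0..<r}"
    then show "phi r a p \<in> setA r a \<times> setB r a"
      using phi_in[of a "fst p" r "snd p"] assms by (cases p) auto
  qed
  show "card (setA r a) * card (setB r a) = r * a\<^sup>2 * r"
    using card_setA[OF assms] card_setB[OF assms] by (simp add: power2_eq_square)
  show "\<And>y t. y < r * a\<^sup>2 \<Longrightarrow> t < r \<Longrightarrow>
    zsub (r * a\<^sup>2) (fst (phi r a (y, t))) (snd (phi r a (y, t))) = y"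
    using phi_z assms by blast
qed (rule fin_sets)+


definition psi :: "nat \<Rightarrow> nat \<Rightarrow> nat \<times> nat \<Rightarrow> nat \<times> nat" where
  "psi r a p = (snd (phi r a ((r*a^2 - fst p) mod (r*a^2), snd p)),
                fst (phi r a ((r*a^2 - fst p) mod (r*a^2), snd p)))"

lemma neg_lt: "x < (n::nat) \<Longrightarrow> (n - x) mod n < n" by simp

lemma neg_neg: "y < (n::nat) \<Longrightarrow> (n - (n - y) mod n) mod n = y"
  by (cases "y = 0") auto

lemma DeltaBA:
  assumes "0 < a"
  shows "Delta (r*a^2) (setB r a) (setA r a) = lam_group (r*a^2) r"
proof (rule generic)
  let ?n = "r*a^2"
  show "inj_on (psi r a) ({0..<?n} \<times> {0..<r})"
  proof (rule inj_onI)
    fix p q assume p: "p \<in> {0..<?n} \<times> {0..<r}" and q: "q \<in> {0..<?n} \<times> {0..<r}"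
      and e: "psi r a p = psi r a q"
    have np: "((?n - fst p) mod ?n, snd p) \<in> {0..<?n} \<times> {0..<r}" using p neg_lt[of "fst p" ?n] by auto
    have nq: "((?n - fst q) mod ?n, snd q) \<in> {0..<?n} \<times> {0..<r}" using q neg_lt[of "fst q" ?n] by auto
    have "phi r a ((?n - fst p) mod ?n, snd p) = phi r a ((?n - fst q) mod ?n, snd q)"
      using e unfolding psi_def by (simp add: prod_eq_iff)
    then have "((?n - fst p) mod ?n, snd p) = ((?n - fst q) mod ?n, snd q)"
      using inj_onD[OF phi_inj[OF assms] _ np nq] by blast
    then have "(?n - (?n - fst p) mod ?n) mod ?n = (?n - (?n - fst q) mod ?n) mod ?n" "snd p = snd q"
      by auto
    moreover have "fst p < ?n" "fst q < ?n" using p q by auto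
    ultimately show "p = q" using neg_neg[of "fst p" ?n] neg_neg[of "fst q" ?n]
      by (simp add: prod_eq_iff)
  qed
  show "psi r a ` ({0..<?n} \<times> {0..<r}) \<subseteq> setB r a \<times> setA r a"
  proof (rule image_subsetI)
    fix p assume p: "p \<in> {0..<?n} \<times> {0..<r}"
    then have "(?n - fst p) mod ?n < ?n" by (intro neg_lt) auto
    then show "psi r a p \<in> setB r a \<times> setA r a"
      using phi_in[of a "(?n - fst p) mod ?n" r "snd p"] assms p unfolding psi_def
      by (auto simp: mem_Times_iff)
  qed
  show "finite (setB r a)" "finite (setA r a)" by (rule fin_sets)+
  show "card (setB r a) * card (setA r a) = ?n * r"
    using card_setA[OF assms] card_setB[OF assms] by (simp add: power2_eq_square)
  fix y t assume y: "y < ?n" and t: "t < r"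
  define ny where "ny = (?n - y) mod ?n"
  have ny: "ny < ?n" unfolding ny_def using y by (rule neg_lt)
  have npos: "0 < ?n" using y by (rule le_less_trans[OF le0])
  have x: "fst (phi r a (ny, t)) < ?n" unfolding phi_def using npos by simp
  have b: "snd (phi r a (ny, t)) < ?n" unfolding phi_def using bb_lt[OF assms t] by simp
  have "zsub ?n (snd (phi r a (ny, t))) (fst (phi r a (ny, t)))
        = (?n - zsub ?n (fst (phi r a (ny, t))) (snd (phi r a (ny, t)))) mod ?n"
    by (rule zsub_swap[OF x b])
  also have "\<dots> = (?n - ny) mod ?n" using phi_z[OF assms ny t] by simp
  also have "\<dots> = y" unfolding ny_def using neg_neg[OF y] .
  finally show "zsub ?n (fst (psi r a (y, t))) (snd (psi r a (y, t))) = y"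
    unfolding psi_def ny_def by simp
qed

lemma family:
  assumes "0 < a" "0 < r"
  shows "is_family (r*a^2) 2 (r*a) [setA r a, setB r a]"
proof -
  have sA: "setA r a \<subseteq> {0..<r*a^2}"
  proof
    fix x assume "x \<in> setA r a"
    then obtain i h where x: "x = i + h*a^2" "i < a" "h < r" unfolding setA_def by auto
    have "h + 1 \<le> r" using x by simp
    then have "(h+1)*a^2 \<le> r*a^2" by (rule mult_right_mono) simp
    moreover have "a \<le> a^2" using assms by (simp add: power2_eq_square)
    ultimately show "x \<in> {0..<r*a^2}" using x by simp
  qed
  have sB: "setB r a \<subseteq> {0..<r*a^2}"
    unfolding setB_def using assms by (auto simp: power2_eq_square)
  show ?thesis unfolding is_family_def
    using sA sB card_setA[OF assms(1)] card_setB[OF assms(1)]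
    by (auto simp: less_2_cases_iff)
qed

lemma PS:
  assumes "0 < a" "0 < r"
  shows "is_PSEDF (r*a^2) 2 (r*a) r [setA r a, setB r a]"
  unfolding is_PSEDF_def using family[OF assms] DeltaAB[OF assms(1)] DeltaBA[OF assms(1)]
  by (auto simp: less_2_cases_iff)

lemma SE:
  assumes "0 < a" "0 < r"
  shows "is_SEDF (r*a^2) 2 (r*a) r [setA r a, setB r a]"
proof -
  have "{0..<2::nat} - {0} = {1}" "{0..<2::nat} - {1} = {0}" by auto
  then show ?thesis
    unfolding is_SEDF_def using family[OF assms] DeltaAB[OF assms(1)] DeltaBA[OF assms(1)]
    by (auto simp: less_2_cases_iff)
qed

theorem corollary3p2:
  shows "(\<forall>a r :: nat. 0 < a \<and> 0 < r \<longrightarrow>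
            (\<exists>As. is_PSEDF (r * a^2) 2 (r * a) r As))
       \<and> (\<forall>lam a :: nat. 0 < lam \<and> 0 < a \<longrightarrow>
            (\<exists>As. is_SEDF (lam * a^2) 2 (lam * a) lam As))
       \<and> (\<forall>k :: nat. 0 < k \<longrightarrow>
            is_SEDF (k^2) 2 k 1 [{0..<k}, (\<lambda>j. j * k) ` {0..<k}])"
proof (intro conjI allI impI)
  fix a r :: nat assume "0 < a \<and> 0 < r"
  then show "\<exists>As. is_PSEDF (r * a^2) 2 (r * a) r As" using PS by blast
next
  fix lam a :: nat assume "0 < lam \<and> 0 < a"
  then show "\<exists>As. is_SEDF (lam * a^2) 2 (lam * a) lam As" using SE by blast
next
  fix k :: nat assume k: "0 < k"
  have A: "setA 1 k = {0..<k}" unfolding setA_def by force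
  have B: "setB 1 k = (\<lambda>j. j * k) ` {0..<k}" unfolding setB_def by simp
  show "is_SEDF (k^2) 2 k 1 [{0..<k}, (\<lambda>j. j * k) ` {0..<k}]"
    using SE[OF k, of 1] unfolding A B by simp
qed

end
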